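(* With $A_1[n]$ defined below, for $n=1,2,\dots$, $$A_1[n]=\frac{n+1}{18}\binom{3n+4}{n+1}\Bigl(F(1,-n-1;2n+4;-2)-\frac{4n+6}{3n+4}\Bigr),$$ where $F(a,b;c;z)$ is the Gauss hypergeometric function.
   Context: $A_0(z)$ is the unique function holomorphic near $z=0$ with $A_0(0)=0$ and $z(1+A_0(z))^3=A_0(z)$, and $A_1(z)=-A_0(z)\left(\frac{1+A_0(z)}{1-2A_0(z)}\right)^4$. The numbers $A_1[n]$ are defined by $A_1(z)=-\sum_{n\ge1}A_1[n]z^n$. *)

theory Defs
  imports "HOL-Complex_Analysis.Complex_Analysis"
begin

text \<open>Gauss hypergeometric series F(a,b;c;z) = sum_k (a)_k (b)_k / ((c)_k k!) z^k.
  In the statement b is a negative integer, so the series terminates (polynomial).\<close>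
definition gauss_hyp :: "complex \<Rightarrow> complex \<Rightarrow> complex \<Rightarrow> complex \<Rightarrow> complex" where
  "gauss_hyp a b c z =
     (\<Sum>k. pochhammer a k * pochhammer b k / (pochhammer c k * fact k) * z ^ k)"

definition A1fun :: "(complex \<Rightarrow> complex) \<Rightarrow> complex \<Rightarrow> complex" where
  "A1fun A0 z = - A0 z * ((1 + A0 z) / (1 - 2 * A0 z)) ^ 4"

text \<open>A_1(z) = - sum_{n>=1} A_1[n] z^n, i.e. A_1[n] = - (n-th Taylor coefficient of A_1 at 0).\<close>
definition A1coeff :: "(complex \<Rightarrow> complex) \<Rightarrow> nat \<Rightarrow> complex" where
  "A1coeff A0 n = - ((deriv ^^ n) (A1fun A0) 0 / fact n)"

end

theory Submission
  imports Defs
begin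

unbundle no vec_syntax



lemma X1_pow_nth: "((1 + fps_X :: complex fps) ^ m) $ k = of_nat (m choose k)"
  by (metis fps_binomial_of_nat fps_binomial_nth binomial_gbinomial)

lemma choose_aux: "((3*k+2) choose (Suc k)) = 2 * ((3*k+2) choose k)"
proof -
  have a: "Suc k * ((3*k+2) choose Suc k) = (3*k+2) * ((3*k+1) choose k)"
    using times_binomial_minus1_eq[of "Suc k" "3*k+2"] by simp
  have b: "(3*k+2 - k) * ((3*k+2) choose k) = (3*k+2) * ((3*k+1) choose k)"
    using binomial_absorb_comp[of "3*k+2" k] by simp
  have c: "3*k+2-k = 2 * Suc k" by simp
  have "Suc k * ((3*k+2) choose Suc k) = Suc k * (2 * ((3*k+2) choose k))"
    using a b unfolding c by (simp add: ac_simps)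
  then show ?thesis by (simp only: mult_cancel1) simp
qed

lemma lag_coeff_zero:
  assumes "m \<ge> 1"
  shows "((1 + fps_X :: complex fps) ^ (3*m-1) * (1 - 2*fps_X)) $ m = 0"
proof -
  obtain k where k: "m = Suc k" using assms by (cases m) auto
  have e: "3*m-1 = 3*k+2" using k by simp
  have "((1 + fps_X :: complex fps) ^ (3*m-1) * (1 - 2*fps_X)) = 
        (1 + fps_X) ^ (3*m-1) - fps_const 2 * (fps_X * (1 + fps_X) ^ (3*m-1))"
    by (simp add: algebra_simps)
  also have "\<dots> $ m = of_nat ((3*m-1) choose m) - 2 * of_nat ((3*m-1) choose (m-1))"
    using assms by (simp only: fps_sub_nth fps_mult_left_const_nth fps_X_mult_nth X1_pow_nth) simp
  also have "\<dots> = 0" unfolding e using choose_aux[of k] k by (simp del: binomial_Suc_Suc)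
  finally show ?thesis .
qed




lemma T_oo_U:
  fixes T :: "complex fps"
  assumes T0: "T $ 0 = 0" and TE: "T = fps_X * (1 + T) ^ 3"
  shows "T oo (fps_X * inverse ((1 + fps_X) ^ 3)) = fps_X"
proof -
  have T1: "T $ 1 = 1"
  proof -
    have "T $ 1 = (fps_X * (1 + T) ^ 3) $ 1" using TE by (rule arg_cong)
    also have "\<dots> = 1" using T0 by (simp add: fps_nth_power_0)
    finally show ?thesis .
  qed
  define V where "V = fps_inv T"
  have V0: "V $ 0 = 0" by (simp add: V_def fps_inv_def)
  have TV: "T oo V = fps_X" unfolding V_def using T0 T1 by (intro fps_inv_right) auto
  have "T oo V = (fps_X * (1 + T) ^ 3) oo V" using TE by (rule arg_cong)
  also have "\<dots> = V * (1 + fps_X) ^ 3"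
    using V0 by (simp add: fps_compose_mult_distrib fps_compose_power[symmetric]
        fps_compose_add_distrib TV)
  finally have XV: "fps_X = V * (1 + fps_X) ^ 3" using TV by simp
  have W0: "((1 + fps_X :: complex fps) ^ 3) $ 0 \<noteq> 0" by (simp add: fps_nth_power_0)
  have "fps_X * inverse ((1 + fps_X) ^ 3) = V * ((1 + fps_X) ^ 3 * inverse ((1 + fps_X :: complex fps) ^ 3))"
    by (subst XV) (simp add: mult.assoc)
  also have "\<dots> = V" using inverse_mult_eq_1'[OF W0] by simp
  finally show ?thesis using TV by simp
qed

lemma UK_coeff:
  assumes "i \<le> n" "n \<ge> 1"
  shows "((fps_X * inverse ((1 + fps_X) ^ 3)) ^ i * ((1 + fps_X) ^ (3*n-1) * (1 - 2*fps_X)) :: complex fps) $ n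
         = (if i = n then 1 else 0)"
proof -
  let ?Y = "1 + fps_X :: complex fps"
  have Y0: "?Y ^ k $ 0 \<noteq> 0" for k by (simp add: fps_nth_power_0)
  have Ui: "(fps_X * inverse (?Y ^ 3)) ^ i = fps_X ^ i * inverse (?Y ^ (3*i))"
    by (simp add: power_mult_distrib fps_inverse_power power_mult)
  show ?thesis
  proof (cases "i = n")
    case False
    define m where "m = n - i"
    have m1: "m \<ge> 1" using assms False by (simp add: m_def)
    have e: "3*n-1 = 3*i + (3*m-1)" using assms False by (simp add: m_def)
    have "(fps_X * inverse (?Y ^ 3)) ^ i * (?Y ^ (3*n-1) * (1 - 2*fps_X))
        = fps_X ^ i * (inverse (?Y ^ (3*i)) * ?Y ^ (3*i)) * (?Y ^ (3*m-1) * (1 - 2*fps_X))"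
      unfolding Ui e power_add by (simp add: ac_simps)
    also have "\<dots> = fps_X ^ i * (?Y ^ (3*m-1) * (1 - 2*fps_X))"
      using inverse_mult_eq_1[OF Y0] by simp
    finally have eq: "(fps_X * inverse (?Y ^ 3)) ^ i * (?Y ^ (3*n-1) * (1 - 2*fps_X))
        = fps_X ^ i * (?Y ^ (3*m-1) * (1 - 2*fps_X))" .
    have "n - i = m" by (simp add: m_def)
    then show ?thesis unfolding eq using False assms lag_coeff_zero[OF m1]
      by (simp only: fps_X_power_mult_nth) simp
  next
    case True
    have e: "3*i = (3*n-1) + 1" using assms True by simp
    have Y1: "?Y $ 0 \<noteq> 0" by simp
    have "(fps_X * inverse (?Y ^ 3)) ^ i * (?Y ^ (3*n-1) * (1 - 2*fps_X))
        = fps_X ^ i * (inverse (?Y ^ (3*n-1)) * ?Y ^ (3*n-1)) * inverse ?Y * (1 - 2*fps_X)"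
      unfolding Ui e power_add by (simp add: fps_inverse_mult ac_simps)
    also have "\<dots> = fps_X ^ i * (inverse ?Y * (1 - 2*fps_X))"
      using inverse_mult_eq_1[OF Y0] by (simp add: ac_simps)
    finally have eq: "(fps_X * inverse (?Y ^ 3)) ^ i * (?Y ^ (3*n-1) * (1 - 2*fps_X))
        = fps_X ^ i * (inverse ?Y * (1 - 2*fps_X))" .
    show ?thesis unfolding eq using True by (simp only: fps_X_power_mult_nth) simp
  qed
qed

lemma lagrange:
  fixes T H :: "complex fps"
  assumes T0: "T $ 0 = 0" and TE: "T = fps_X * (1 + T) ^ 3" and n: "n \<ge> 1"
  shows "(H oo T) $ n = (H * ((1 + fps_X) ^ (3*n-1) * (1 - 2*fps_X))) $ n"
proof -
  define U where "U = fps_X * inverse ((1 + fps_X :: complex fps) ^ 3)"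
  define K where "K = (1 + fps_X :: complex fps) ^ (3*n-1) * (1 - 2*fps_X)"
  define c where "c = H oo T"
  have U0: "U $ 0 = 0" by (simp add: U_def)
  have TU: "T oo U = fps_X" unfolding U_def by (rule T_oo_U[OF T0 TE])
  have Hc: "H = c oo U"
    unfolding c_def using fps_compose_assoc[OF U0 T0, of H] TU by simp
  have Hj: "H $ j = (\<Sum>i=0..n. c $ i * (U ^ i) $ j)" if "j \<le> n" for j
  proof -
    have "H $ j = (\<Sum>i=0..j. c $ i * (U ^ i) $ j)" by (subst Hc) (simp add: fps_compose_nth)
    also have "\<dots> = (\<Sum>i=0..n. c $ i * (U ^ i) $ j)"
      using that startsby_zero_power_prefix[OF U0]
      by (intro sum.mono_neutral_left) auto
    finally show ?thesis .
  qed
  have "(H * K) $ n = (\<Sum>j=0..n. H $ j * K $ (n - j))" by (simp add: fps_mult_nth)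
  also have "\<dots> = (\<Sum>j=0..n. \<Sum>i=0..n. c $ i * ((U ^ i) $ j * K $ (n - j)))"
    by (intro sum.cong refl) (simp add: Hj sum_distrib_right mult.assoc)
  also have "\<dots> = (\<Sum>i=0..n. c $ i * (U ^ i * K) $ n)"
    by (subst sum.swap) (simp add: fps_mult_nth sum_distrib_left)
  also have "\<dots> = (\<Sum>i=0..n. c $ i * (if i = n then 1 else 0))"
    unfolding U_def K_def using UK_coeff[OF _ n] by (intro sum.cong refl) simp
  also have "\<dots> = c $ n" using n by (simp add: if_distrib[of "\<lambda>x. c $ i * x" for i] cong: if_cong)
  finally show ?thesis unfolding c_def K_def ..
qed




lemma coeff_identity:
  assumes n: "n \<ge> 1"
  shows "18 * (fps_X * (1 + fps_X) ^ (3*n+3) * inverse (1 - 2*fps_X) ^ 3 :: complex fps) $ n =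
         of_nat (n+1) * ((1 + fps_X) ^ (3*n+4) * inverse (1 - 2*fps_X)) $ (n+1)
         - 2 * of_nat (2*n+3) * ((1 + fps_X) ^ (3*n+3)) $ n"
proof -
  define Y where "Y = (1 + fps_X :: complex fps)"
  define E where "E = (1 - 2*fps_X :: complex fps)"
  define D where "D = inverse E"
  define M where "M = Y ^ (3*n+2)"
  define R where "R = - ((1 - 8*fps_X) * Y * D^2)"
  define P where "P = Y^(3*n+3) * R"
  define G where "G = Y^(3*n+4) * D"
  have E0: "E $ 0 \<noteq> 0" by (simp add: E_def)
  have ED: "E * D = 1" unfolding D_def using inverse_mult_eq_1'[OF E0] .
  have dD: "fps_deriv D = 2 * D^2"
    unfolding D_def using fps_inverse_deriv[OF E0] by (simp add: E_def)
  have dY: "fps_deriv Y = 1" by (simp add: Y_def)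
  have dD2: "fps_deriv (D^2) = 4 * D^3"
    by (simp add: fps_deriv_power dD power2_eq_square power3_eq_cube algebra_simps)
  have dR: "fps_deriv R = - (-8 * Y * D^2 + (1 - 8*fps_X) * D^2 + (1 - 8*fps_X) * Y * (4 * D^3))"
    unfolding R_def by (simp add: dD2 dY algebra_simps)
  have dYN: "fps_deriv (Y^(3*n+3)) = of_nat (3*n+3) * M"
    unfolding M_def by (simp add: fps_deriv_power' dY)
  have YN: "Y^(3*n+3) = M * Y"
  proof -
    have e: "3*n+3 = Suc (3*n+2)" by simp
    show ?thesis unfolding M_def by (simp only: e power_Suc2)
  qed
  have dP: "fps_deriv P = of_nat (3*n+3) * M * R + M * Y * fps_deriv R"
    unfolding P_def fps_deriv_mult dYN unfolding YN by (simp add: algebra_simps)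
  have dG: "fps_deriv G = of_nat (3*n+4) * M * Y * D + M * Y * Y * (2 * D^2)"
  proof -
    have e: "3*n+4 = Suc (Suc (3*n+2))" by simp
    have Y4: "Y^(3*n+4) = M * Y * Y" unfolding M_def by (simp only: e power_Suc2)
    have dY4: "fps_deriv (Y^(3*n+4)) = of_nat (3*n+4) * (M * Y)"
      by (simp add: fps_deriv_power' dY add.commute flip: YN)
    show ?thesis unfolding G_def fps_deriv_mult dY4 unfolding Y4 dD by (simp add: algebra_simps)
  qed
  have key: "M * Y * (18*fps_X*D^3 - of_nat (3*n+4)*D - 2*Y*D^2 + 2* of_nat (2*n+3))
      = fps_X * fps_deriv P - of_nat n * P"
  proof -
    have c1: "(of_nat (3*n+3) :: complex fps) = 3 * of_nat n + 3" by simp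
    have c2: "(of_nat (3*n+4) :: complex fps) = 3 * of_nat n + 4" by simp
    have c3: "(of_nat (2*n+3) :: complex fps) = 2 * of_nat n + 3" by simp
    have Yd: "Y = 1 + fps_X" by (simp add: Y_def)
    have Ed: "E = 1 - 2 * fps_X" by (simp add: E_def)
    show ?thesis unfolding dP dR c1 c2 c3 unfolding P_def R_def YN
      using ED Yd Ed by algebra
  qed
  have key2: "18 * (fps_X * Y^(3*n+3) * D^3) - fps_deriv G
      + of_nat (2*(2*n+3)) * Y^(3*n+3)
      = fps_X * fps_deriv P - of_nat n * P"
    unfolding key[symmetric] dG YN by (simp add: algebra_simps)
  have "(fps_const 18 * (fps_X * Y^(3*n+3) * D^3) - fps_deriv G
      + fps_const (of_nat (2*(2*n+3))) * Y^(3*n+3)) $ n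
      = (fps_X * fps_deriv P - fps_const (of_nat n) * P) $ n" 
    using key2 by (simp only: fps_of_nat flip: numeral_fps_const)
  moreover have "(fps_X * fps_deriv P - fps_const (of_nat n) * P) $ n = 0"
    using n by (cases n) (simp_all add: fps_deriv_nth)
  ultimately have "18 * (fps_X * Y^(3*n+3) * D^3) $ n - of_nat (n+1) * G $ (n+1)
      + 2 * of_nat (2*n+3) * (Y^(3*n+3)) $ n = 0"
    by (simp add: fps_deriv_nth)
  then show ?thesis unfolding Y_def D_def E_def G_def by (simp add: algebra_simps)
qed




lemma inv_1m2X: "inverse (1 - 2*fps_X :: complex fps) = Abs_fps (\<lambda>k. 2^k)"
proof (rule fps_inverse_unique)
  show "(1 - 2*fps_X) * Abs_fps (\<lambda>k. 2^k) = (1 :: complex fps)"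
  proof (rule fps_ext)
    fix k
    have "((1 - 2*fps_X) * Abs_fps (\<lambda>k. 2^k)) $ k
        = (Abs_fps (\<lambda>k. 2^k) - fps_const 2 * (fps_X * Abs_fps (\<lambda>k. (2::complex)^k))) $ k"
      by (simp add: algebra_simps numeral_fps_const)
    also have "\<dots> = (1 :: complex fps) $ k"
      by (cases k) simp_all
    finally show "((1 - 2*fps_X) * Abs_fps (\<lambda>k. 2^k)) $ k = (1 :: complex fps) $ k" .
  qed
qed

lemma S2_eq: "((1 + fps_X) ^ (3*n+4) * inverse (1 - 2*fps_X) :: complex fps) $ (n+1)
   = (\<Sum>k=0..n+1. of_nat ((3*n+4) choose (n+1-k)) * 2^k)"
proof -
  have "((1 + fps_X) ^ (3*n+4) * inverse (1 - 2*fps_X) :: complex fps) $ (n+1)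
      = (Abs_fps (\<lambda>k. 2^k) * (1 + fps_X) ^ (3*n+4) :: complex fps) $ (n+1)"
    unfolding inv_1m2X by (rule arg_cong[where f="\<lambda>x. x $ (n+1)"]) (rule mult.commute)
  also have "\<dots> = (\<Sum>k=0..n+1. of_nat ((3*n+4) choose (n+1-k)) * 2^k)"
    unfolding fps_mult_nth by (intro sum.cong refl) (simp add: X1_pow_nth mult.commute)
  finally show ?thesis .
qed

lemma poch_neg: "pochhammer (- of_nat m :: complex) k = (-1)^k * of_nat (m choose k) * fact k"
proof -
  have "pochhammer (- of_nat m :: complex) k = (-1)^k * pochhammer (of_nat m - of_nat k + 1) k"
    by (rule pochhammer_minus)
  also have "pochhammer (of_nat m - of_nat k + 1 :: complex) k = (of_nat m gchoose k) * fact k"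
    by (simp add: gbinomial_pochhammer')
  finally show ?thesis by (simp add: binomial_gbinomial)
qed

lemma poch_pos: "pochhammer (of_nat a :: complex) k = of_nat ((a + k - 1) choose k) * fact k"
  if "a \<ge> 1"
proof -
  have "(of_nat (a + k - 1) gchoose k :: complex) = pochhammer (of_nat (a+k-1) - of_nat k + 1) k / fact k"
    by (rule gbinomial_pochhammer')
  also have "of_nat (a+k-1) - of_nat k + 1 = (of_nat a :: complex)"
    using that by (simp add: of_nat_diff)
  finally show ?thesis by (simp add: binomial_gbinomial)
qed

lemma choose_trinom:
  assumes "k \<le> n+1"
  shows "((3*n+4) choose (n+1)) * ((n+1) choose k) = ((3*n+4) choose (n+1-k)) * ((2*n+3+k) choose k)"
proof -
  have a: "((3*n+4) choose (n+1)) * ((n+1) choose k) = ((3*n+4) choose k) * ((3*n+4-k) choose (n+1-k))"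
    using assms by (intro choose_mult) auto
  have b: "((3*n+4) choose (2*n+3+k)) * ((2*n+3+k) choose k) = ((3*n+4) choose k) * ((3*n+4-k) choose (2*n+3))"
    using assms choose_mult[of k "2*n+3+k" "3*n+4"] by auto
  have c: "(3*n+4) choose (2*n+3+k) = (3*n+4) choose (n+1-k)"
    using assms binomial_symmetric[of "n+1-k" "3*n+4"] by (simp add: algebra_simps)
  have d: "(3*n+4-k) choose (2*n+3) = (3*n+4-k) choose (n+1-k)"
    using assms binomial_symmetric[of "n+1-k" "3*n+4-k"] by (simp add: algebra_simps)
  show ?thesis using a b c d by simp
qed

lemma gauss_term:
  assumes "k \<le> n+1"
  shows "of_nat ((3*n+4) choose (n+1)) *
     (pochhammer 1 k * pochhammer (- of_nat (n+1)) k / (pochhammer (of_nat (2*n+4)) k * fact k) * (-2)^k)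
     = (of_nat ((3*n+4) choose (n+1-k)) * 2^k :: complex)"
proof -
  have p1: "pochhammer 1 k = (fact k :: complex)" by (simp add: pochhammer_fact)
  have p2: "pochhammer (of_nat (2*n+4)) k = of_nat ((2*n+3+k) choose k) * (fact k :: complex)"
  proof -
    have e: "2*n+4+k-1 = 2*n+3+k" by simp
    show ?thesis using poch_pos[of "2*n+4" k, unfolded e] by simp
  qed
  have nz: "of_nat ((2*n+3+k) choose k) \<noteq> (0::complex)" by simp
  have fz: "(fact k :: complex) \<noteq> 0" by simp
  have m2: "((-2)::complex)^k = (-1)^k * 2^k" by (simp add: power_mult_distrib[symmetric])
  have e: "(of_nat ((3*n+4) choose (n+1)) * of_nat ((n+1) choose k) :: complex)
      = of_nat ((3*n+4) choose (n+1-k)) * of_nat ((2*n+3+k) choose k)"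
    using choose_trinom[OF assms] by (simp flip: of_nat_mult)
  have pm: "((-1::complex)^k) * (-1)^k = 1" by (simp flip: power_mult_distrib)
  show ?thesis
    unfolding p1 p2 poch_neg m2 using nz fz e pm
    by (simp add: field_simps)
qed

lemma gauss_sum: "gauss_hyp 1 (- of_nat (n + 1)) (of_nat (2 * n + 4)) (-2)
   = (\<Sum>k=0..n+1. pochhammer 1 k * pochhammer (- of_nat (n+1)) k / (pochhammer (of_nat (2*n+4)) k * fact k) * (-2)^k)"
  unfolding gauss_hyp_def
proof (rule suminf_finite)
  fix k assume "k \<notin> {0..n+1}"
  then have "k > n+1" by simp
  then have "pochhammer (- of_nat (n+1) :: complex) k = 0"
    by (rule pochhammer_of_nat_eq_0_lemma)
  then show "pochhammer 1 k * pochhammer (- of_nat (n+1)) k / (pochhammer (of_nat (2*n+4)) k * fact k) * (-2)^k = (0::complex)"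
    by simp
qed simp




lemma HK_aux:
  fixes x y z d e :: "complex fps"
  assumes "e * d = 1"
  shows "- (x * (y * d) ^ 4) * (z * e) = - (x * (y ^ 4 * z) * d ^ 3)"
  using assms by algebra

theorem proposition6:
  fixes A0 :: "complex \<Rightarrow> complex" and r :: real and n :: nat
  assumes "r > 0"
    and "A0 holomorphic_on ball 0 r"
    and "A0 0 = 0"
    and "\<forall>z\<in>ball 0 r. z * (1 + A0 z) ^ 3 = A0 z"
    and "n \<ge> 1"
  shows "A1coeff A0 n =
    of_nat (n + 1) / 18 * of_nat ((3 * n + 4) choose (n + 1)) *
    (gauss_hyp 1 (- of_nat (n + 1)) (of_nat (2 * n + 4)) (-2)
       - of_nat (4 * n + 6) / of_nat (3 * n + 4))"
proof -
  note r = assms(1) and holo = assms(2) and A00 = assms(3) and fe = assms(4) and n = assms(5)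
  define T where "T = fps_expansion A0 0"
  have hasT: "A0 has_fps_expansion T"
    unfolding T_def using r holo by (intro has_fps_expansion_fps_expansion) auto
  have T0: "T $ 0 = 0" using fps_nth_fps_expansion[OF hasT, of 0] A00 by simp
  have h2: "(\<lambda>z. z * (1 + A0 z) ^ 3) has_fps_expansion fps_X * (1 + T) ^ 3"
    by (intro has_fps_expansion_mult has_fps_expansion_power has_fps_expansion_add
        has_fps_expansion_fps_X has_fps_expansion_1 hasT)
  have ev: "eventually (\<lambda>z. z * (1 + A0 z) ^ 3 = A0 z) (nhds 0)"
    unfolding eventually_nhds using r fe by (intro exI[of _ "ball 0 r"]) auto
  have h3: "A0 has_fps_expansion fps_X * (1 + T) ^ 3"
    using has_fps_expansion_cong[OF ev refl] h2 by simp
  have TE: "T = fps_X * (1 + T) ^ 3"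
    by (rule fps_ext) (simp only: fps_nth_fps_expansion[OF hasT] fps_nth_fps_expansion[OF h3])
  define H where "H = - (fps_X * ((1 + fps_X) * inverse (1 - 2 * fps_X)) ^ 4 :: complex fps)"
  have hH: "(\<lambda>w. - (w * ((1 + w) * inverse (1 - 2 * w)) ^ 4)) has_fps_expansion H"
    unfolding H_def
    by (intro has_fps_expansion_minus has_fps_expansion_mult has_fps_expansion_power
        has_fps_expansion_add has_fps_expansion_diff has_fps_expansion_inverse
        has_fps_expansion_fps_X has_fps_expansion_1 has_fps_expansion_numeral) simp_all
  have A1eq: "A1fun A0 = (\<lambda>w. - (w * ((1 + w) * inverse (1 - 2 * w)) ^ 4)) \<circ> A0"
    by (rule ext) (simp add: A1fun_def divide_inverse)
  have hF: "A1fun A0 has_fps_expansion (H oo T)"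
    unfolding A1eq by (rule has_fps_expansion_compose[OF hH hasT T0])
  have c1: "A1coeff A0 n = - (H oo T) $ n"
    unfolding A1coeff_def using fps_nth_fps_expansion[OF hF, of n] by simp
  define Y where "Y = (1 + fps_X :: complex fps)"
  define E where "E = (1 - 2*fps_X :: complex fps)"
  define D where "D = inverse E"
  have E0: "E $ 0 \<noteq> 0" by (simp add: E_def)
  have ED: "E * D = 1" unfolding D_def using inverse_mult_eq_1'[OF E0] .
  have Yp: "Y^(3*n+3) = Y^4 * Y^(3*n-1)"
  proof -
    have e: "3*n+3 = 4 + (3*n-1)" using n by simp
    show ?thesis by (simp only: e power_add)
  qed
  have HK: "H * (Y^(3*n-1) * E) = - (fps_X * Y^(3*n+3) * D^3)"
    unfolding H_def Yp unfolding Y_def[symmetric] E_def[symmetric] D_def[symmetric]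
    using ED by (rule HK_aux)
  have c2: "A1coeff A0 n = (fps_X * Y^(3*n+3) * D^3) $ n"
    unfolding c1 using lagrange[OF T0 TE n, of H] HK by (simp add: Y_def E_def)
  have ci: "18 * (fps_X * Y^(3*n+3) * D^3) $ n =
         of_nat (n+1) * (Y ^ (3*n+4) * D) $ (n+1) - 2 * of_nat (2*n+3) * (Y ^ (3*n+3)) $ n"
    using coeff_identity[OF n] by (simp add: Y_def D_def E_def)
  have S2: "(Y ^ (3*n+4) * D) $ (n+1) = (\<Sum>k=0..n+1. of_nat ((3*n+4) choose (n+1-k)) * 2^k)"
    using S2_eq[of n] by (simp add: Y_def D_def E_def)
  have B: "(Y ^ (3*n+3)) $ n = of_nat ((3*n+3) choose n)"
    by (simp add: Y_def X1_pow_nth)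
  have G: "of_nat ((3 * n + 4) choose (n + 1)) * gauss_hyp 1 (- of_nat (n + 1)) (of_nat (2 * n + 4)) (-2)
      = (\<Sum>k=0..n+1. of_nat ((3*n+4) choose (n+1-k)) * (2::complex)^k)"
    unfolding gauss_sum sum_distrib_left by (intro sum.cong refl gauss_term) simp
  have Cn: "(n+1) * ((3*n+4) choose (n+1)) = (3*n+4) * ((3*n+3) choose n)"
    using times_binomial_minus1_eq[of "n+1" "3*n+4"] by (simp add: add.commute)
  have Cn': "of_nat (n+1) * of_nat ((3*n+4) choose (n+1)) = (of_nat (3*n+4) * of_nat ((3*n+3) choose n) :: complex)"
    using arg_cong[OF Cn, of "of_nat :: nat \<Rightarrow> complex"] by (simp only: of_nat_mult)
  define S where "S = (\<Sum>k=0..n+1. of_nat ((3*n+4) choose (n+1-k)) * (2::complex)^k)"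
  define C where "C = (of_nat ((3*n+4) choose (n+1)) :: complex)"
  define Bc where "Bc = (of_nat ((3*n+3) choose n) :: complex)"
  have nz: "(of_nat (3*n+4) :: complex) \<noteq> 0" by (simp only: of_nat_eq_0_iff)
  have L: "A1coeff A0 n = (of_nat (n+1) * S - 2 * of_nat (2*n+3) * Bc) / 18"
  proof -
    have ci': "18 * (fps_X * Y^(3*n+3) * D^3) $ n = of_nat (n+1) * S - 2 * of_nat (2*n+3) * Bc"
      using ci unfolding S2 B S_def Bc_def .
    show ?thesis unfolding c2 using ci' by (simp add: eq_divide_eq mult.commute)
  qed
  have R: "of_nat (n + 1) / 18 * C * (gauss_hyp 1 (- of_nat (n + 1)) (of_nat (2 * n + 4)) (-2)
       - of_nat (4 * n + 6) / of_nat (3 * n + 4))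
      = (of_nat (n+1) * S - 2 * of_nat (2*n+3) * Bc) / 18"
  proof -
    have g: "C * gauss_hyp 1 (- of_nat (n + 1)) (of_nat (2 * n + 4)) (-2) = S"
      using G unfolding C_def S_def .
    have cn: "of_nat (n+1) * C = of_nat (3*n+4) * Bc" using Cn' unfolding C_def Bc_def .
    have "of_nat (n + 1) / 18 * C * (gauss_hyp 1 (- of_nat (n + 1)) (of_nat (2 * n + 4)) (-2)
       - of_nat (4 * n + 6) / of_nat (3 * n + 4))
       = (of_nat (n+1) * (C * gauss_hyp 1 (- of_nat (n + 1)) (of_nat (2 * n + 4)) (-2))
          - (of_nat (n+1) * C) * of_nat (4 * n + 6) / of_nat (3 * n + 4)) / 18"
      by (simp add: field_simps)
    also have "\<dots> = (of_nat (n+1) * S - of_nat (4 * n + 6) * Bc) / 18"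
      unfolding g cn using nz by simp
    also have "\<dots> = (of_nat (n+1) * S - 2 * of_nat (2*n+3) * Bc) / 18"
      by simp
    finally show ?thesis .
  qed
  show ?thesis unfolding L R[unfolded C_def] ..
qed


end
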